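(* Let $\varphi:\mathfrak{h}\to V^*$ be a complex factorization structure and $j\in\{1,\ldots,m\}$. Then for every $\ell\in\mathbb{P}(V_j)$ (not only generic ones) there exists $T\in\hat V_j^*$ such that $\varphi(\psi_j(\ell))$ is spanned by $\alpha\otimes T$, where $\alpha$ spans $\ell^0\subset V_j^*$ and is placed in the $j$-th slot.
   Context: $V_1,\ldots,V_m$ are 2-dimensional complex vector spaces, $V^*=V_1^*\otimes\cdots\otimes V_m^*$, $\hat V_j^*=\bigotimes_{r\neq j}V_r^*$, $\ell^0$ is the annihilator of $\ell$. $\Sigma^0_{j,\ell}=V_1^*\otimes\cdots\otimes\ell^0\otimes\cdots\otimes V_m^*$ ($\ell^0$ in slot $j$). A factorization structure of dimension $m$ is an injective linear map $\varphi:\mathfrak{h}\to V^*$, $\dim\mathfrak{h}=m+1$, with $\dim(\varphi(\mathfrak{h})\cap\Sigma^0_{j,\ell})=1$ for all $j$ and all $\ell$ in a nonempty Zariski-open subset of $\mathbb{P}(V_j)$. The $j$-th factorization curve $\psi_j:\mathbb{P}(V_j)\to\mathbb{P}(\mathfrak{h})$ is the unique regular extension to all of $\mathbb{P}(V_j)\cong\mathbb{P}^1$ of the generically defined regular map $\ell\mapsto\varphi^{-1}(\varphi(\mathfrak{h})\cap\Sigma^0_{j,\ell})$. *)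

theory Defs
  imports Complex_Main
begin

text \<open>Each V_j is identified with complex x complex (coordinates w.r.t. a
basis), V_j^* likewise (a covector alpha acts by alpha(v) = fst alpha * fst v + snd alpha * snd v).
A tensor in V^* = V_1^* ... V_m^* is a function on multi-indices (bool lists of length m,
False = first basis covector, True = second), vanishing off lists of length m.
The space h (dim m+1) is identified with C^(m+1) = vectors nat => complex supported on {0..m};
phi is given by the images B 0, ..., B m of the standard basis.\<close>

definition is_tensor :: "nat \<Rightarrow> (bool list \<Rightarrow> complex) \<Rightarrow> bool" where
  "is_tensor k T \<longleftrightarrow> (\<forall>xs. length xs \<noteq> k \<longrightarrow> T xs = 0)"

definition ann :: "complex \<times> complex \<Rightarrow> complex \<times> complex \<Rightarrow> bool" where
  "ann \<alpha> v \<longleftrightarrow> fst \<alpha> * fst v + snd \<alpha> * snd v = 0"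

text \<open>alpha placed in slot j (1-based) tensored with T in the tensor product of the other slots.\<close>
definition slot_tensor ::
  "nat \<Rightarrow> nat \<Rightarrow> complex \<times> complex \<Rightarrow> (bool list \<Rightarrow> complex) \<Rightarrow> bool list \<Rightarrow> complex" where
  "slot_tensor m j \<alpha> T xs =
     (if length xs = m
      then (if xs ! (j - 1) then snd \<alpha> else fst \<alpha>) * T (take (j - 1) xs @ drop j xs)
      else 0)"

definition Sigma0 :: "nat \<Rightarrow> nat \<Rightarrow> complex \<times> complex \<Rightarrow> (bool list \<Rightarrow> complex) set" where
  "Sigma0 m j v = {slot_tensor m j \<alpha> S | \<alpha> S. ann \<alpha> v \<and> is_tensor (m - 1) S}"

definition hvec :: "nat \<Rightarrow> (nat \<Rightarrow> complex) set" where
  "hvec m = {x. \<forall>i>m. x i = 0}"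

definition phi :: "nat \<Rightarrow> (nat \<Rightarrow> bool list \<Rightarrow> complex) \<Rightarrow> (nat \<Rightarrow> complex) \<Rightarrow> bool list \<Rightarrow> complex" where
  "phi m B x = (\<lambda>xs. \<Sum>i\<le>m. x i * B i xs)"

definition phi_img :: "nat \<Rightarrow> (nat \<Rightarrow> bool list \<Rightarrow> complex) \<Rightarrow> (bool list \<Rightarrow> complex) set" where
  "phi_img m B = {phi m B x | x. x \<in> hvec m}"

definition injective_phi :: "nat \<Rightarrow> (nat \<Rightarrow> bool list \<Rightarrow> complex) \<Rightarrow> bool" where
  "injective_phi m B \<longleftrightarrow> (\<forall>x\<in>hvec m. \<forall>y\<in>hvec m. phi m B x = phi m B y \<longrightarrow> x = y)"

definition one_dim :: "(bool list \<Rightarrow> complex) set \<Rightarrow> bool" where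
  "one_dim S \<longleftrightarrow> (\<exists>w. (\<exists>xs. w xs \<noteq> 0) \<and> S = {(\<lambda>xs. c * w xs) | c. True})"

definition proj_pt :: "complex \<times> complex \<Rightarrow> (complex \<times> complex) set" where
  "proj_pt v = {(c * fst v, c * snd v) | c. True}"

definition P1 :: "(complex \<times> complex) set set" where
  "P1 = {proj_pt v | v. v \<noteq> (0, 0)}"

definition zopen_P1 :: "(complex \<times> complex) set set \<Rightarrow> bool" where
  "zopen_P1 U \<longleftrightarrow> U \<subseteq> P1 \<and> (U = {} \<or> finite (P1 - U))"

definition hline :: "(nat \<Rightarrow> complex) \<Rightarrow> (nat \<Rightarrow> complex) set" where
  "hline x = {(\<lambda>i. c * x i) | c. True}"

definition hom_eval :: "nat \<Rightarrow> (nat \<Rightarrow> complex) \<Rightarrow> complex \<times> complex \<Rightarrow> complex" where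
  "hom_eval d c v = (\<Sum>k\<le>d. c k * fst v ^ k * snd v ^ (d - k))"

definition hpoly_vec :: "nat \<Rightarrow> nat \<Rightarrow> (nat \<Rightarrow> nat \<Rightarrow> complex) \<Rightarrow> complex \<times> complex \<Rightarrow> nat \<Rightarrow> complex" where
  "hpoly_vec m d c v = (\<lambda>i. if i \<le> m then hom_eval d (c i) v else 0)"

definition regular_P1 :: "nat \<Rightarrow> ((complex \<times> complex) set \<Rightarrow> (nat \<Rightarrow> complex) set) \<Rightarrow> bool" where
  "regular_P1 m psi \<longleftrightarrow>
    (\<forall>v. v \<noteq> (0, 0) \<longrightarrow>
      (\<exists>U d c. zopen_P1 U \<and> proj_pt v \<in> U \<and>
         (\<forall>w. w \<noteq> (0, 0) \<and> proj_pt w \<in> U \<longrightarrow>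
              (\<exists>i. hpoly_vec m d c w i \<noteq> 0) \<and> psi (proj_pt w) = hline (hpoly_vec m d c w))))"

definition factorization_structure :: "nat \<Rightarrow> (nat \<Rightarrow> bool list \<Rightarrow> complex) \<Rightarrow> bool" where
  "factorization_structure m B \<longleftrightarrow>
     (\<forall>i\<le>m. is_tensor m (B i)) \<and> injective_phi m B \<and>
     (\<forall>j\<in>{1..m}. \<exists>U. zopen_P1 U \<and> U \<noteq> {} \<and>
        (\<forall>v. v \<noteq> (0, 0) \<and> proj_pt v \<in> U \<longrightarrow> one_dim (phi_img m B \<inter> Sigma0 m j v)))"

definition factorization_curve ::
  "nat \<Rightarrow> (nat \<Rightarrow> bool list \<Rightarrow> complex) \<Rightarrow> nat \<Rightarrow> ((complex \<times> complex) set \<Rightarrow> (nat \<Rightarrow> complex) set) \<Rightarrow> bool" where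
  "factorization_curve m B j psi \<longleftrightarrow> regular_P1 m psi \<and>
     (\<exists>U. zopen_P1 U \<and> U \<noteq> {} \<and>
        (\<forall>v. v \<noteq> (0, 0) \<and> proj_pt v \<in> U \<longrightarrow>
            one_dim (phi_img m B \<inter> Sigma0 m j v) \<and>
            psi (proj_pt v) = {x \<in> hvec m. phi m B x \<in> Sigma0 m j v}))"

end

theory Submission imports Defs "HOL-Analysis.Analysis" begin

lemma cont_zero:
  fixes g :: "complex \<Rightarrow> complex"
  assumes "continuous_on UNIV g" "finite F" "\<forall>t. t \<notin> F \<longrightarrow> g t = 0"
  shows "g a = 0"
proof -
  have cl: "closed {t. g t = 0}"
    using assms(1) continuous_closed_preimage_constant[of UNIV g 0] by (simp add: vimage_def)
  have "- F \<subseteq> {t. g t = 0}" using assms(3) by auto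
  hence "closure (- F) \<subseteq> {t. g t = 0}" using cl closure_minimal by blast
  moreover have "closure (- F) = UNIV"
    by (metis closure_complement empty_interior_finite[OF assms(2)] Compl_empty_eq)
  ultimately show ?thesis by auto
qed

lemma contr_good:
  assumes "t \<in> Sigma0 m j w" "j \<in> {1..m}" "length xs = m"
  shows "fst w * t (xs[j-1:=False]) + snd w * t (xs[j-1:=True]) = 0"
proof -
  obtain \<alpha> S where t: "t = slot_tensor m j \<alpha> S" and a: "ann \<alpha> w"
    using assms(1) unfolding Sigma0_def by blast
  have k: "j - 1 < length xs" using assms by auto
  have e1: "take (j-1) (xs[j-1:=b]) @ drop j (xs[j-1:=b]) = take (j-1) xs @ drop j xs" for b
    using k assms(2) by (simp add: Suc_diff_1[symmetric])
  have "fst w * t (xs[j-1:=False]) + snd w * t (xs[j-1:=True])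
      = (fst \<alpha> * fst w + snd \<alpha> * snd w) * S (take (j-1) xs @ drop j xs)"
    unfolding t slot_tensor_def using k e1 assms(3) by (simp add: algebra_simps)
  also have "\<dots> = 0" using a by (simp add: ann_def)
  finally show ?thesis .
qed

lemma decomp:
  assumes "is_tensor m t" "v \<noteq> (0,0)" "j \<in> {1..m}"
    and c: "\<forall>xs. length xs = m \<longrightarrow> fst v * t (xs[j-1:=False]) + snd v * t (xs[j-1:=True]) = 0"
  shows "\<exists>T. is_tensor (m-1) T \<and> t = slot_tensor m j (- snd v, fst v) T"
proof -
  define ins where "ins b ys = take (j-1) ys @ b # drop (j-1) ys" for b and ys :: "bool list"
  have insx: "ins b (take (j-1) xs @ drop j xs) = xs[j-1:=b]" if "length xs = m" for b xs
  proof -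
    have "j - 1 < length xs" "Suc (j-1) = j" using that assms(3) by auto
    thus ?thesis using upd_conv_take_nth_drop[of "j-1" xs b] that assms(3) unfolding ins_def
      by (simp add: min_def)
  qed
  show ?thesis
  proof (cases "fst v = 0")
    case False
    define T where "T ys = (if length ys = m - 1 then t (ins True ys) / fst v else 0)" for ys
    have "t = slot_tensor m j (- snd v, fst v) T"
    proof
      fix xs :: "bool list"
      show "t xs = slot_tensor m j (- snd v, fst v) T xs"
      proof (cases "length xs = m")
        case True
        have l: "length (take (j-1) xs @ drop j xs) = m - 1" using True assms(3) by auto
        have k: "j - 1 < length xs" using True assms(3) by auto
        have xu: "xs[j-1 := xs!(j-1)] = xs" by simp
        show ?thesis
        proof (cases "xs!(j-1)")
          case True2: True
          have "t (xs[j-1:=True]) = t xs" by (metis xu True2)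
          thus ?thesis using True2 False True l insx[OF True]
            unfolding slot_tensor_def T_def by simp
        next
          case False2: False
          have "xs[j-1:=False] = xs" by (metis xu False2)
          hence "fst v * t xs + snd v * t (xs[j-1:=True]) = 0" using c True by metis
          hence "t xs = - snd v * t (xs[j-1:=True]) / fst v" using False
            by (simp add: field_simps add_eq_0_iff2)
          thus ?thesis using False2 True l insx[OF True] unfolding slot_tensor_def T_def
            by simp
        qed
      next
        case False
        thus ?thesis using assms(1) by (simp add: is_tensor_def slot_tensor_def)
      qed
    qed
    moreover have "is_tensor (m-1) T" by (simp add: is_tensor_def T_def)
    ultimately show ?thesis by blast
  next
    case True
    hence sv: "snd v \<noteq> 0" using assms(2) by (cases v) auto
    define T where "T ys = (if length ys = m - 1 then t (ins False ys) / (- snd v) else 0)" for ys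
    have "t = slot_tensor m j (- snd v, fst v) T"
    proof
      fix xs :: "bool list"
      show "t xs = slot_tensor m j (- snd v, fst v) T xs"
      proof (cases "length xs = m")
        case L: True
        have l: "length (take (j-1) xs @ drop j xs) = m - 1" using L assms(3) by auto
        have xu: "xs[j-1 := xs!(j-1)] = xs" by simp
        show ?thesis
        proof (cases "xs!(j-1)")
          case True2: True
          have "xs[j-1:=True] = xs" by (metis xu True2)
          hence "fst v * t (xs[j-1:=False]) + snd v * t xs = 0" using c L by metis
          hence "snd v * t xs = 0" using True by simp
          thus ?thesis using True2 True L sv unfolding slot_tensor_def by simp
        next
          case False2: False
          have "t (xs[j-1:=False]) = t xs" by (metis xu False2)
          thus ?thesis using False2 L l insx[OF L] sv
            unfolding slot_tensor_def T_def by simp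
        qed
      next
        case False
        thus ?thesis using assms(1) by (simp add: is_tensor_def slot_tensor_def)
      qed
    qed
    moreover have "is_tensor (m-1) T" by (simp add: is_tensor_def T_def)
    ultimately show ?thesis by blast
  qed
qed

lemma line_inj:
  fixes v u :: "complex \<times> complex"
  assumes d: "fst v * snd u - snd v * fst u \<noteq> 0"
  shows "inj (\<lambda>s. proj_pt (fst v + s * fst u, snd v + s * snd u))"
proof
  fix s1 s2 assume e: "proj_pt (fst v + s1 * fst u, snd v + s1 * snd u) = proj_pt (fst v + s2 * fst u, snd v + s2 * snd u)"
  have "(fst v + s1 * fst u, snd v + s1 * snd u) \<in> proj_pt (fst v + s1 * fst u, snd v + s1 * snd u)"
    unfolding proj_pt_def by (rule CollectI, rule exI[of _ 1]) simp
  with e obtain c where c1: "fst v + s1 * fst u = c * (fst v + s2 * fst u)"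
     and c2: "snd v + s1 * snd u = c * (snd v + s2 * snd u)"
    unfolding proj_pt_def by auto
  have "(1 - c) * (fst v * snd u - snd v * fst u) = 0"
    using c1 c2 by algebra
  hence "c = 1" using d by simp
  hence "(s1 - s2) * fst u = 0" "(s1 - s2) * snd u = 0" using c1 c2 by (simp_all add: algebra_simps)
  thus "s1 = s2" using d by auto
qed

lemma line_nz:
  fixes v u :: "complex \<times> complex"
  assumes d: "fst v * snd u - snd v * fst u \<noteq> 0"
  shows "(fst v + s * fst u, snd v + s * snd u) \<noteq> (0, 0)"
proof
  assume "(fst v + s * fst u, snd v + s * snd u) = (0, 0)"
  hence "fst v = - s * fst u" "snd v = - s * snd u" by (auto simp: add_eq_0_iff2)
  thus False using d by (simp add: algebra_simps)
qed

lemma phi_hp: "phi m B (hpoly_vec m d c w) ys = (\<Sum>i\<le>m. hom_eval d (c i) w * B i ys)"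
  unfolding phi_def hpoly_vec_def by (rule sum.cong) auto

lemma phi_tensor: assumes "\<forall>i\<le>m. is_tensor m (B i)" shows "is_tensor m (phi m B y)"
  using assms unfolding is_tensor_def phi_def by simp

lemma phi_scale: "phi m B (\<lambda>i. c * y i) = (\<lambda>xs. c * phi m B y xs)"
  unfolding phi_def by (simp add: sum_distrib_left mult.assoc)

theorem proposition2p6:
  fixes m j :: nat
    and B :: "nat \<Rightarrow> bool list \<Rightarrow> complex"
    and psi :: "(complex \<times> complex) set \<Rightarrow> (nat \<Rightarrow> complex) set"
  assumes "factorization_structure m B"
    and "j \<in> {1..m}"
    and "factorization_curve m B j psi"
  shows "\<forall>v. v \<noteq> (0, 0) \<longrightarrow>
           (\<exists>\<alpha> T. \<alpha> \<noteq> (0, 0) \<and> ann \<alpha> v \<and> is_tensor (m - 1) T \<and>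
              phi m B ` psi (proj_pt v) = {(\<lambda>xs. c * slot_tensor m j \<alpha> T xs) | c. True})"
proof (intro allI impI)
  fix v :: "complex \<times> complex" assume v: "v \<noteq> (0, 0)"
  have tens: "\<forall>i\<le>m. is_tensor m (B i)" using assms(1) unfolding factorization_structure_def by blast
  have reg: "regular_P1 m psi" using assms(3) unfolding factorization_curve_def by blast
  have "\<exists>U. zopen_P1 U \<and> U \<noteq> {} \<and>
        (\<forall>v. v \<noteq> (0, 0) \<and> proj_pt v \<in> U \<longrightarrow>
            one_dim (phi_img m B \<inter> Sigma0 m j v) \<and>
            psi (proj_pt v) = {x \<in> hvec m. phi m B x \<in> Sigma0 m j v})"
    using assms(3) unfolding factorization_curve_def by (rule conjunct2)
  then obtain U' where U'01: "zopen_P1 U'" "U' \<noteq> {}" and U'2: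
        "\<forall>v. v \<noteq> (0, 0) \<and> proj_pt v \<in> U' \<longrightarrow>
            one_dim (phi_img m B \<inter> Sigma0 m j v) \<and>
            psi (proj_pt v) = {x \<in> hvec m. phi m B x \<in> Sigma0 m j v}"
    by (elim exE conjE)
  have U': "zopen_P1 U'" "U' \<noteq> {}"
    "\<forall>w. w \<noteq> (0, 0) \<and> proj_pt w \<in> U' \<longrightarrow> psi (proj_pt w) = {x \<in> hvec m. phi m B x \<in> Sigma0 m j w}"
    using U'01 U'2 by simp_all
  have "\<exists>U d c. zopen_P1 U \<and> proj_pt v \<in> U \<and>
         (\<forall>w. w \<noteq> (0, 0) \<and> proj_pt w \<in> U \<longrightarrow>
              (\<exists>i. hpoly_vec m d c w i \<noteq> 0) \<and> psi (proj_pt w) = hline (hpoly_vec m d c w))"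
    using reg v unfolding regular_P1_def by (elim allE impE)
  then obtain U d c where U: "zopen_P1 U" "proj_pt v \<in> U"
    "\<forall>w. w \<noteq> (0, 0) \<and> proj_pt w \<in> U \<longrightarrow> (\<exists>i. hpoly_vec m d c w i \<noteq> 0) \<and> psi (proj_pt w) = hline (hpoly_vec m d c w)"
    by (elim exE conjE)
  define x where "x = hpoly_vec m d c"
  have fU: "finite (P1 - U)" using U(1,2) unfolding zopen_P1_def by auto
  have fU': "finite (P1 - U')" using U'(1,2) unfolding zopen_P1_def by auto
  define u :: "complex \<times> complex" where "u = (if fst v \<noteq> 0 then (0, 1) else (1, 0))"
  have det: "fst v * snd u - snd v * fst u \<noteq> 0" using v unfolding u_def by (cases v) auto
  define w where "w s = (fst v + s * fst u, snd v + s * snd u)" for s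
  have w0: "w 0 = v" unfolding w_def by simp
  define F where "F = (\<lambda>s. proj_pt (w s)) -` ((P1 - U) \<union> (P1 - U'))"
  have fF: "finite F" unfolding F_def w_def
    by (rule finite_vimageI) (use fU fU' line_inj[OF det] in auto)
  have k: "j - 1 < m" using assms(2) by auto
  have contr: "fst v * phi m B (x v) (xs[j-1:=False]) + snd v * phi m B (x v) (xs[j-1:=True]) = 0"
    if L: "length xs = m" for xs
  proof -
    define g where "g s = fst (w s) * phi m B (x (w s)) (xs[j-1:=False]) + snd (w s) * phi m B (x (w s)) (xs[j-1:=True])" for s
    have "continuous_on UNIV g"
      unfolding g_def x_def phi_hp unfolding hom_eval_def w_def fst_conv snd_conv
      by (intro continuous_intros)
    moreover have "\<forall>s. s \<notin> F \<longrightarrow> g s = 0"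
    proof (intro allI impI)
      fix s assume "s \<notin> F"
      have nz: "w s \<noteq> (0, 0)" unfolding w_def by (rule line_nz[OF det])
      hence P: "proj_pt (w s) \<in> P1" unfolding P1_def by blast
      with \<open>s \<notin> F\<close> have inU: "proj_pt (w s) \<in> U" "proj_pt (w s) \<in> U'" unfolding F_def by auto
      have "x (w s) \<in> hline (x (w s))" unfolding hline_def by (rule CollectI, rule exI[of _ 1]) simp
      moreover have "psi (proj_pt (w s)) = hline (x (w s))" using U(3) nz inU(1) unfolding x_def by blast
      ultimately have "x (w s) \<in> psi (proj_pt (w s))" by simp
      hence "phi m B (x (w s)) \<in> Sigma0 m j (w s)" using U'(3) nz inU by auto
      thus "g s = 0" unfolding g_def using contr_good assms(2) L by blast
    qed
    ultimately have "g 0 = 0" using cont_zero fF by blast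
    thus ?thesis unfolding g_def w0 .
  qed
  obtain T where T: "is_tensor (m-1) T" "phi m B (x v) = slot_tensor m j (- snd v, fst v) T"
    using decomp[OF phi_tensor[OF tens] v assms(2)] contr by blast
  have psiv: "psi (proj_pt v) = hline (x v)" using U(2,3) v unfolding x_def by blast
  have img: "phi m B ` psi (proj_pt v) = {(\<lambda>xs. c * slot_tensor m j (- snd v, fst v) T xs) | c. True}"
  proof -
    have ps: "\<And>c. phi m B (\<lambda>i. c * x v i) = (\<lambda>xs. c * slot_tensor m j (- snd v, fst v) T xs)"
      using phi_scale[of m B _ "x v"] T(2) by simp
    show ?thesis unfolding psiv hline_def
    proof (rule set_eqI, rule iffI)
      fix f assume "f \<in> phi m B ` {(\<lambda>i. c * x v i) |c. True}"
      thus "f \<in> {(\<lambda>xs. c * slot_tensor m j (- snd v, fst v) T xs) |c. True}" using ps by auto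
    next
      fix f assume "f \<in> {(\<lambda>xs. c * slot_tensor m j (- snd v, fst v) T xs) |c. True}"
      then obtain c where "f = (\<lambda>xs. c * slot_tensor m j (- snd v, fst v) T xs)" by blast
      hence "f = phi m B (\<lambda>i. c * x v i)" using ps by simp
      thus "f \<in> phi m B ` {(\<lambda>i. c * x v i) |c. True}" by blast
    qed
  qed
  show "\<exists>\<alpha> T. \<alpha> \<noteq> (0, 0) \<and> ann \<alpha> v \<and> is_tensor (m - 1) T \<and>
              phi m B ` psi (proj_pt v) = {(\<lambda>xs. c * slot_tensor m j \<alpha> T xs) | c. True}"
  proof (intro exI conjI)
    show "(- snd v, fst v) \<noteq> (0, 0)" using v by (cases v) auto
    show "ann (- snd v, fst v) v" unfolding ann_def by simp
  qed (use T img in auto)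
qed

end
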